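(* For integers $n\ge k\ge 0$ define the Salié coefficients $s(n,k)$ by the bivariate generating function $$\sum_{n,k\ge 0}\frac{x^{2n}}{(2n)!}\,s(n,k)\,y^{k}=\frac{\cosh\!\left(\tfrac12 x\sqrt{1+4y}\right)}{\cosh\!\left(\tfrac12 x\right)},$$ and set $\epsilon(n,k)=|s(n,k)|/4^{k}$. For a positive integer $N$, let $M_E$ be the $N\times N$ lower triangular matrix with entries $(M_E)_{m,n}=(-1)^{m-n}4^{m}\binom{m}{2(m-n)}$ for $1\le n\le m\le N$ (and $0$ for $n>m$). Then $s(n,k)=(-1)^{n-k}|s(n,k)|$ for all $n\ge k\ge 1$, the matrix $M_E$ is invertible with $(M_E^{-1})_{n,k}=\epsilon(n,k)$ for $1\le k\le n\le N$, and for every $n\ge1$ $$|E_{2n}(1/2)|=(-1)^{n}E_{2n}(1/2)=\sum_{k=1}^{n}\epsilon(n,k).$$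
   Context: $E_m(x)$ denotes the Euler polynomials, defined by $\frac{2e^{xt}}{e^{t}+1}=\sum_{m\ge0}E_m(x)\frac{t^m}{m!}$. Equivalently, the column vector $\vec E$ with entries $|E_{2n}(1/2)|$, $n=1,\dots,N$, satisfies $M_E\vec E=\vec 1$ (the all-ones column). *)

theory Defs
  imports "HOL-Analysis.Analysis" "Jordan_Normal_Form.Matrix"
begin

text \<open>The N x N lower triangular matrix M_E, with paper indices 1..N stored at
  0-based positions: entry (m,n) of the paper is stored at (m-1,n-1).\<close>
definition ME :: "nat \<Rightarrow> real mat" where
  "ME N = mat N N (\<lambda>(i, j). let m = i + 1; n = j + 1 in
      if n \<le> m then (-1) ^ (m - n) * 4 ^ m * real (m choose (2 * (m - n))) else 0)"

end

theory Submission
  imports Defs "Jordan_Normal_Form.Determinant" "HOL-Analysis.FPS_Convergence"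
begin


lemma tri_unique:
  fixes X Y :: "nat \<Rightarrow> real"
  assumes "\<And>n. (\<Sum>j\<le>n. real (2*n choose (2*j)) * 4^j * X j) = (\<Sum>j\<le>n. real (2*n choose (2*j)) * 4^j * Y j)"
  shows "X n = Y n"
proof (induction n rule: less_induct)
  case (less n)
  have "(\<Sum>j<n. real (2*n choose (2*j)) * 4^j * X j) = (\<Sum>j<n. real (2*n choose (2*j)) * 4^j * Y j)"
    using less by (intro sum.cong) auto
  with assms[of n] have "4^n * X n = 4^n * Y n"
    by (simp add: lessThan_Suc_atMost[symmetric])
  then show ?case by simp
qed

lemma powser_unique0:
  fixes a :: "nat \<Rightarrow> real"
  assumes d: "d > 0" and sm: "\<And>x. \<bar>x\<bar> < d \<Longrightarrow> (\<lambda>n. a n * x^n) sums 0"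
  shows "a n = 0"
proof (induction n rule: less_induct)
  case (less n)
  have *: "(\<lambda>i. a (i+n) * x^i) sums 0" if x: "x \<noteq> 0" "norm x < d" for x
  proof -
    have "(\<lambda>i. a i * x^i) sums 0" using sm x by auto
    moreover have "(\<Sum>i<n. a i * x^i) = 0" using less by auto
    ultimately have "(\<lambda>i. a (i+n) * x^(i+n)) sums 0"
      using sums_iff_shift[of "\<lambda>i. a i * x^i" n 0] by simp
    then have "(\<lambda>i. a (i+n) * x^(i+n) * (1 / x^n)) sums (0 * (1/x^n))"
      by (rule sums_mult2)
    moreover have "(\<lambda>i. a (i+n) * x^(i+n) * (1 / x^n)) = (\<lambda>i. a (i+n) * x^i)"
      using x by (auto simp: power_add)
    ultimately show ?thesis by simp
  qed
  have "((\<lambda>x::real. 0::real) \<longlongrightarrow> (\<lambda>i. a (i+n)) 0) (at 0)"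
    by (rule powser_limit_0_strong[where a="\<lambda>i. a (i+n)", OF d]) (use * in auto)
  then show ?case
    using LIM_unique[OF _ tendsto_const[of 0 "at (0::real)"]] by auto
qed

lemma fps_eq_real:
  fixes f g :: "real fps"
  assumes d: "d > 0"
    and "\<And>x. \<bar>x\<bar> < d \<Longrightarrow> (\<lambda>n. fps_nth f n * x^n) sums v x"
    and "\<And>x. \<bar>x\<bar> < d \<Longrightarrow> (\<lambda>n. fps_nth g n * x^n) sums v x"
  shows "f = g"
proof (rule fps_ext)
  fix n
  have "fps_nth (f - g) n = 0"
  proof (rule powser_unique0[OF d])
    fix x :: real assume "\<bar>x\<bar> < d"
    from sums_diff[OF assms(2)[OF this] assms(3)[OF this]]
    show "(\<lambda>n. fps_nth (f - g) n * x^n) sums 0" by (simp add: algebra_simps)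
  qed
  then show "fps_nth f n = fps_nth g n" by simp
qed

definition Ev :: "(nat \<Rightarrow> real) \<Rightarrow> real fps" where
  "Ev Q = Abs_fps (\<lambda>m. if even m then Q (m div 2) / fact m else 0)"

lemma Ev_nth: "fps_nth (Ev Q) m = (if even m then Q (m div 2) / fact m else 0)"
  by (simp add: Ev_def)

lemma Ev_nth_even [simp]: "fps_nth (Ev Q) (2*n) = Q n / fact (2*n)"
  by (simp add: Ev_def)

lemma Ev_inj: "Ev Q = Ev R \<Longrightarrow> Q n = R n"
proof -
  assume "Ev Q = Ev R"
  then have "fps_nth (Ev Q) (2*n) = fps_nth (Ev R) (2*n)" by simp
  then show ?thesis by simp
qed

definition Ch :: "real \<Rightarrow> real fps" where
  "Ch c = Ev (\<lambda>n. c^(2*n))"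

lemma even_sum_lemma:
  fixes g :: "nat \<Rightarrow> real"
  shows "(\<Sum>i\<le>2*n. if even i then g i else 0) = (\<Sum>j\<le>n. g (2*j))"
proof (induction n)
  case 0 then show ?case by simp
next
  case (Suc n)
  have "2 * Suc n = Suc (Suc (2*n))" by simp
  then show ?case using Suc by (simp only: sum.atMost_Suc) simp
qed

lemma L0:
  fixes F :: "real fps"
  shows "fps_nth (F * Ch c) (2*n) * fact (2*n) =
     (\<Sum>j\<le>n. real (2*n choose (2*j)) * c^(2*(n-j)) * (fact (2*j) * fps_nth F (2*j)))"
proof -
  have "fps_nth (F * Ch c) (2*n) = (\<Sum>i\<le>2*n. fps_nth F i * fps_nth (Ch c) (2*n - i))"
    by (simp add: fps_mult_nth atLeast0AtMost)
  also have "\<dots> = (\<Sum>i\<le>2*n. if even i then fps_nth F i * (c^(2*n-i) / fact (2*n-i)) else 0)"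
  proof (intro sum.cong refl)
    fix i assume "i \<in> {..2*n}"
    then have i: "i \<le> 2*n" by simp
    show "fps_nth F i * fps_nth (Ch c) (2*n - i) = (if even i then fps_nth F i * (c^(2*n-i) / fact (2*n-i)) else 0)"
    proof (cases "even i")
      case True
      then have "2 * ((2*n - i) div 2) = 2*n - i" using i by presburger
      then show ?thesis using True i by (simp add: Ch_def Ev_nth)
    next
      case False
      then have "odd (2*n - i)" using i by presburger
      then show ?thesis using False by (simp add: Ch_def Ev_nth)
    qed
  qed
  also have "\<dots> = (\<Sum>j\<le>n. fps_nth F (2*j) * (c^(2*n-2*j) / fact (2*n-2*j)))"
    by (rule even_sum_lemma)
  finally have "fps_nth (F * Ch c) (2*n) * fact (2*n) = (\<Sum>j\<le>n. fps_nth F (2*j) * (c^(2*n-2*j) / fact (2*n-2*j))) * fact (2*n)"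
    by simp
  also have "\<dots> = (\<Sum>j\<le>n. real (2*n choose (2*j)) * c^(2*(n-j)) * (fact (2*j) * fps_nth F (2*j)))"
    unfolding sum_distrib_right
  proof (intro sum.cong refl)
    fix j assume "j \<in> {..n}"
    then have j: "2*j \<le> 2*n" by simp
    have e: "2*n - 2*j = 2*(n-j)" by simp
    have "fact (2*j) * fact (2*n - 2*j) * (2*n choose (2*j)) = fact (2*n)"
      by (rule binomial_fact_lemma[OF j])
    then have "real (fact (2*j) * fact (2*(n-j)) * (2*n choose (2*j))) = fact (2*n)"
      unfolding e by (metis of_nat_fact)
    then have f: "fact (2*n) = real (2*n choose (2*j)) * fact (2*j) * (fact (2*(n-j)) :: real)"
      by (simp add: of_nat_mult mult_ac)
    show "fps_nth F (2*j) * (c^(2*n-2*j) / fact (2*n-2*j)) * fact (2*n) =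
        real (2*n choose (2*j)) * c^(2*(n-j)) * (fact (2*j) * fps_nth F (2*j))"
      unfolding e f by simp
  qed
  finally show ?thesis .
qed

lemma L1:
  "Ev Q * Ch c = Ev (\<lambda>n. \<Sum>j\<le>n. real (2*n choose (2*j)) * c^(2*(n-j)) * Q j)"
proof (rule fps_ext)
  fix m
  show "fps_nth (Ev Q * Ch c) m = fps_nth (Ev (\<lambda>n. \<Sum>j\<le>n. real (2*n choose (2*j)) * c^(2*(n-j)) * Q j)) m"
  proof (cases "even m")
    case True
    then obtain n where m: "m = 2*n" by blast
    have "fps_nth (Ev Q * Ch c) (2*n) * fact (2*n) = (\<Sum>j\<le>n. real (2*n choose (2*j)) * c^(2*(n-j)) * Q j)"
      unfolding L0 by simp
    then show ?thesis unfolding m Ev_nth_even by (simp add: field_simps)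
  next
    case False
    have "fps_nth (Ev Q * Ch c) m = (\<Sum>i\<le>m. fps_nth (Ev Q) i * fps_nth (Ch c) (m - i))"
      by (simp add: fps_mult_nth atLeast0AtMost)
    also have "\<dots> = 0"
    proof (intro sum.neutral ballI)
      fix i assume "i \<in> {..m}"
      then have "i \<le> m" by simp
      then have "odd i \<or> odd (m - i)" using False by presburger
      then show "fps_nth (Ev Q) i * fps_nth (Ch c) (m - i) = 0" by (auto simp: Ch_def Ev_nth)
    qed
    finally show ?thesis using False by (simp add: Ev_nth)
  qed
qed

lemma L2: "fps_deriv (fps_deriv (Ev Q)) = Ev (\<lambda>n. Q (Suc n))"
proof (rule fps_ext)
  fix m
  show "fps_nth (fps_deriv (fps_deriv (Ev Q))) m = fps_nth (Ev (\<lambda>n. Q (Suc n))) m"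
  proof (cases "even m")
    case True
    then obtain n where m: "m = 2*n" by blast
    have "Suc (Suc (2*n)) = 2 * Suc n" by simp
    moreover have "fact (Suc (Suc (2*n))) = real (Suc (Suc (2*n))) * real (Suc (2*n)) * (fact (2*n)::real)"
      by (simp add: fact_Suc del: mult_Suc_right)
    ultimately show ?thesis unfolding m
      by (simp add: Ev_nth del: mult_Suc_right of_nat_Suc)
  next
    case False
    then show ?thesis by (simp add: Ev_nth)
  qed
qed




lemma Ev_cmult: "Ev (\<lambda>n. c * Q n) = fps_const c * Ev Q"
  by (rule fps_ext) (simp add: Ev_nth)

lemma Ch_nth0 [simp]: "fps_nth (Ch c) 0 = 1"
  by (simp add: Ch_def Ev_nth)

lemma Ch_sums: "(\<lambda>m. fps_nth (Ch c) m * x^m) sums cosh (c*x)"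
proof -
  have "(\<lambda>n. ((c*x)^n /\<^sub>R fact n + (-(c*x))^n /\<^sub>R fact n) * (1/2)) sums ((exp (c*x) + exp (-(c*x))) * (1/2))"
    by (intro sums_mult2 sums_add exp_converges)
  moreover have "(\<lambda>n. ((c*x)^n /\<^sub>R fact n + (-(c*x))^n /\<^sub>R fact n) * (1/2)) = (\<lambda>m. fps_nth (Ch c) m * x^m)"
  proof
    fix m :: nat
    show "((c*x)^m /\<^sub>R fact m + (-(c*x))^m /\<^sub>R fact m) * (1/2) = fps_nth (Ch c) m * x^m"
    proof (cases "even m")
      case True
      then have "2 * (m div 2) = m" by simp
      then show ?thesis using True by (simp add: Ch_def Ev_nth power_mult_distrib field_simps)
    next
      case False
      then show ?thesis by (simp add: Ch_def Ev_nth)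
    qed
  qed
  ultimately show ?thesis by (simp add: cosh_def)
qed

lemma radius_from_summable:
  fixes f :: "real fps"
  assumes "\<And>z. \<bar>z\<bar> < d \<Longrightarrow> summable (\<lambda>n. fps_nth f n * z^n)" "\<bar>x\<bar> < d"
  shows "ereal (norm x) < fps_conv_radius f"
proof -
  let ?z = "(\<bar>x\<bar> + d) / 2"
  have "\<bar>?z\<bar> < d" using assms(2) by auto
  then have "ereal (norm ?z) \<le> conv_radius (fps_nth f)"
    by (intro conv_radius_geI assms(1))
  moreover have "ereal (norm x) < ereal (norm ?z)" using assms(2) by auto
  ultimately show ?thesis unfolding fps_conv_radius_def
    using less_le_trans by blast
qed

lemma Ch_radius: fixes x :: real shows "ereal (norm x) < fps_conv_radius (Ch c)"
  by (rule radius_from_summable[where d="\<bar>x\<bar>+1"]) (auto intro: sums_summable[OF Ch_sums])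

definition C0 :: "real fps" where "C0 = Ch (1/2)"
definition S0 :: "real fps" where "S0 = 2 * fps_deriv C0"
definition H0 :: "real fps" where "H0 = S0 / C0"

lemma C0_nth0 [simp]: "fps_nth C0 0 = 1" by (simp add: C0_def)
lemma C0_nz: "C0 \<noteq> 0" using C0_nth0 by (metis fps_zero_nth zero_neq_one)

lemma C0_dd: "fps_deriv (fps_deriv C0) = fps_const (1/4) * C0"
proof -
  have "fps_deriv (fps_deriv C0) = Ev (\<lambda>n. (1/2::real)^(2*Suc n))"
    unfolding C0_def Ch_def L2 ..
  also have "(\<lambda>n. (1/2::real)^(2*Suc n)) = (\<lambda>n. (1/4) * (1/2)^(2*n))"
    by (auto simp: power_add power_mult)
  finally show ?thesis unfolding Ev_cmult C0_def Ch_def .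
qed

lemma H0C0: "H0 * C0 = S0"
proof -
  have "H0 * C0 = S0 * (inverse C0 * C0)" unfolding H0_def
    by (simp add: fps_divide_unit mult_ac)
  also have "inverse C0 * C0 = 1" by (rule inverse_mult_eq_1) simp
  finally show ?thesis by simp
qed

lemma half_two: "fps_const (1/2) * 2 = (1::real fps)"
  by (rule fps_ext) (simp add: fps_numeral_nth)

lemma two_quarter: "2 * fps_const (1/4) = (fps_const (1/2)::real fps)"
  by (rule fps_ext) (simp add: fps_numeral_nth)

lemma C0_d: "fps_deriv C0 = fps_const (1/2) * H0 * C0"
proof -
  have "fps_const (1/2) * H0 * C0 = (fps_const (1/2) * 2) * fps_deriv C0"
    by (simp add: mult.assoc H0C0 S0_def)
  then show ?thesis by (simp add: half_two)
qed

lemma S0_nth0: "fps_nth S0 0 = 0"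
  by (simp add: S0_def C0_def Ch_def Ev_nth)

lemma H0_nth0: "fps_nth H0 0 = 0"
proof -
  have "fps_nth (H0 * C0) 0 = 0" by (simp add: H0C0 S0_nth0)
  then show ?thesis by (simp add: fps_mult_nth)
qed

lemma H0_d: "fps_deriv H0 = fps_const (1/2) * (1 - H0 * H0)"
proof -
  let ?h = "fps_const (1/2) :: real fps"
  have "fps_deriv (H0 * C0) = fps_deriv S0" by (simp add: H0C0)
  then have "H0 * fps_deriv C0 + fps_deriv H0 * C0 = 2 * fps_deriv (fps_deriv C0)"
    by (simp add: S0_def)
  also have "\<dots> = (2 * fps_const (1/4)) * C0" by (simp add: C0_dd mult.assoc)
  also have "\<dots> = ?h * C0" by (simp add: two_quarter)
  finally have e1: "H0 * (?h * H0 * C0) + fps_deriv H0 * C0 = ?h * C0"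
    by (simp add: C0_d)
  have "(fps_deriv H0 - ?h * (1 - H0 * H0)) * C0 = (H0 * (?h * H0 * C0) + fps_deriv H0 * C0) - ?h * C0"
    by (simp add: algebra_simps)
  also have "\<dots> = 0" using e1 by simp
  finally show ?thesis using C0_nz by simp
qed




lemma H0_coeff:
  "real (Suc p) * fps_nth H0 (Suc p) = (1/2) * ((if p = 0 then 1 else 0) - (\<Sum>i=0..p. fps_nth H0 i * fps_nth H0 (p - i)))"
proof -
  have "fps_nth (fps_deriv H0) p = fps_nth (fps_const (1/2) * (1 - H0 * H0)) p" by (simp add: H0_d)
  moreover have "fps_nth (fps_const (1/2) * (1 - H0 * H0)) p = 1/2 * (fps_nth 1 p - fps_nth (H0*H0) p)"
    by simp
  moreover have "fps_nth (H0*H0) p = (\<Sum>i=0..p. fps_nth H0 i * fps_nth H0 (p - i))"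
    by (rule fps_mult_nth)
  ultimately show ?thesis by (simp add: add.commute)
qed

lemma H0_sign: "(even m \<longrightarrow> fps_nth H0 m = 0) \<and> (odd m \<longrightarrow> 0 \<le> (-1)^(m div 2) * fps_nth H0 m)"
proof (induction m rule: less_induct)
  case (less m)
  show ?case
  proof (cases m)
    case 0 then show ?thesis by (simp add: H0_nth0)
  next
    case (Suc p)
    have IH: "(even i \<longrightarrow> fps_nth H0 i = 0) \<and> (odd i \<longrightarrow> 0 \<le> (-1)^(i div 2) * fps_nth H0 i)" if "i \<le> p" for i
      using less that Suc by auto
    show ?thesis
    proof (cases "even p")
      case False
      have "(\<Sum>i=0..p. fps_nth H0 i * fps_nth H0 (p - i)) = 0"
      proof (intro sum.neutral ballI)
        fix i assume "i \<in> {0..p}"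
        then have i: "i \<le> p" by simp
        then have "even i \<or> even (p - i)" using False by presburger
        then show "fps_nth H0 i * fps_nth H0 (p - i) = 0" using IH[OF i] IH[of "p-i"] by auto
      qed
      moreover have "p \<noteq> 0" using False by presburger
      ultimately have "real (Suc p) * fps_nth H0 (Suc p) = 0" using H0_coeff[of p] by simp
      then show ?thesis using Suc False by simp
    next
      case True
      then obtain j where p: "p = 2*j" by blast
      have md: "m div 2 = j" using Suc p by simp
      have T: "(-1)^j * (fps_nth H0 i * fps_nth H0 (p - i)) \<le> 0" if i: "i \<le> p" for i
      proof (cases "even i")
        case True then show ?thesis using IH[OF i] by simp
      next
        case False
        define a where "a = i div 2"
        define b where "b = (p - i) div 2"
        have oi: "odd (p - i)" using False i True by presburger
        have ab: "j = Suc (a + b)" using False oi i p unfolding a_def b_def by presburger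
        have "0 \<le> (-1)^a * fps_nth H0 i" using IH[OF i] False a_def by auto
        moreover have "0 \<le> (-1)^b * fps_nth H0 (p - i)" using IH[of "p-i"] oi b_def by auto
        ultimately have "0 \<le> ((-1)^a * fps_nth H0 i) * ((-1)^b * fps_nth H0 (p - i))"
          by (rule mult_nonneg_nonneg)
        then show ?thesis unfolding ab by (simp add: power_add mult_ac)
      qed
      have "(-1)^j * (\<Sum>i=0..p. fps_nth H0 i * fps_nth H0 (p - i)) \<le> 0"
        unfolding sum_distrib_left by (intro sum_nonpos T) auto
      moreover have "0 \<le> (-1)^j * (if p = 0 then 1 else (0::real))" using p by auto
      ultimately have "0 \<le> (-1)^j * (real (Suc p) * fps_nth H0 (Suc p))"
        unfolding H0_coeff by (simp add: algebra_simps)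
      then have "0 \<le> real (Suc p) * ((-1)^j * fps_nth H0 (Suc p))" by (simp add: mult_ac)
      then have "0 \<le> (-1)^j * fps_nth H0 (Suc p)"
        by (simp add: zero_le_mult_iff)
      then show ?thesis using Suc md p by simp
    qed
  qed
qed

lemma A_rec:
  fixes A :: "real fps"
  assumes AC: "A * C0 = Ev (\<lambda>n. (y + 1/4)^n)"
  shows "fps_deriv (fps_deriv A) = fps_const y * A - H0 * fps_deriv A"
proof -
  let ?h = "fps_const (1/2) :: real fps"
  let ?q = "fps_const (1/4) :: real fps"
  have "fps_deriv (fps_deriv (Ev (\<lambda>n. (y + 1/4)^n))) = Ev (\<lambda>n. (y + 1/4) * (y+1/4)^n)"
    unfolding L2 by simp
  also have "\<dots> = fps_const (y + 1/4) * (A * C0)" unfolding Ev_cmult AC ..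
  moreover have yq: "fps_const (y + 1/4) = fps_const y + ?q" by (rule fps_ext) simp
  ultimately have F2: "fps_deriv (fps_deriv (A * C0)) = (fps_const y + ?q) * (A * C0)"
    using AC by metis
  have d2: "fps_deriv (fps_deriv (A*C0)) = fps_deriv (fps_deriv A) * C0 + 2 * (fps_deriv A * fps_deriv C0) + A * fps_deriv (fps_deriv C0)"
    by (simp add: algebra_simps mult_2)
  have "2 * (fps_deriv A * fps_deriv C0) = (2 * ?h) * (fps_deriv A * H0 * C0)"
    by (simp add: C0_d ac_simps)
  also have "2 * ?h = 1" using half_two by (simp add: mult.commute)
  finally have m: "2 * (fps_deriv A * fps_deriv C0) = fps_deriv A * H0 * C0" by simp
  have "(fps_deriv (fps_deriv A) - (fps_const y * A - H0 * fps_deriv A)) * C0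
      = fps_deriv (fps_deriv (A*C0)) - (fps_const y + ?q) * (A * C0)"
    unfolding d2 m C0_dd by (simp add: algebra_simps del: fps_const_add)
  also have "\<dots> = 0" using F2 by simp
  finally show ?thesis using C0_nz by simp
qed




lemma rad_mult:
  fixes f g :: "real fps"
  assumes "ereal (norm t) < fps_conv_radius f" "ereal (norm t) < fps_conv_radius g"
  shows "ereal (norm t) < fps_conv_radius (f * g)"
proof -
  have "ereal (norm t) < min (fps_conv_radius f) (fps_conv_radius g)" using assms by simp
  then show ?thesis using fps_conv_radius_mult[of f g] by (rule less_le_trans)
qed

lemma Ef_lemma:
  fixes E :: "nat \<Rightarrow> real \<Rightarrow> real"
  assumes euler_gf: "\<forall>x. \<exists>\<delta>>0. \<forall>t. \<bar>t\<bar> < \<delta> \<longrightarrow>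
      (\<lambda>m. E m x * t ^ m / fact m) sums (2 * exp (x * t) / (exp t + 1))"
  shows "(\<Sum>j\<le>n. real (2*n choose (2*j)) * 4^j * E (2*j) (1/2)) = (if n = 0 then 1 else 0)"
proof -
  obtain d where d: "d > 0" and sm: "\<And>t. \<bar>t\<bar> < d \<Longrightarrow>
      (\<lambda>m. E m (1/2) * t ^ m / fact m) sums (2 * exp (1/2 * t) / (exp t + 1))"
    using euler_gf by blast
  define Ef where "Ef = Abs_fps (\<lambda>m. E m (1/2) / fact m)"
  have smE: "(\<lambda>m. fps_nth Ef m * t^m) sums (2 * exp (1/2 * t) / (exp t + 1))" if "\<bar>t\<bar> < d" for t
    using sm[OF that] by (simp add: Ef_def field_simps)
  have "Ef * Ch (1/2) = 1"
  proof (rule fps_eq_real[OF d])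
    fix t :: real assume t: "\<bar>t\<bar> < d"
    have r: "ereal (norm t) < fps_conv_radius Ef"
      by (rule radius_from_summable[OF _ t]) (use smE sums_summable in blast)
    have "(\<lambda>m. fps_nth (Ef * Ch (1/2)) m * t^m) sums eval_fps (Ef * Ch (1/2)) t"
      by (rule sums_eval_fps, rule rad_mult[OF r Ch_radius])
    also have "eval_fps (Ef * Ch (1/2)) t = eval_fps Ef t * eval_fps (Ch (1/2)) t"
      by (rule eval_fps_mult[OF r Ch_radius])
    also have "eval_fps Ef t = 2 * exp (1/2 * t) / (exp t + 1)"
      using smE[OF t] unfolding eval_fps_def by (simp add: sums_iff)
    also have "eval_fps (Ch (1/2)) t = cosh (1/2 * t)"
      using Ch_sums unfolding eval_fps_def by (simp add: sums_iff)
    also have "2 * exp (1/2 * t) / (exp t + 1) * cosh (1/2 * t) = 1"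
    proof -
      have e1: "exp (t/2) * exp (t/2) = exp t" by (simp flip: exp_add)
      have e2: "exp (t/2) * exp (-(t/2)) = 1" by (simp flip: exp_add)
      have c: "cosh (1/2*t) = (exp (t/2) + exp (-(t/2)))/2" by (simp add: cosh_def)
      have "2 * exp (1/2*t) * cosh (1/2*t) = exp (t/2) * exp (t/2) + exp (t/2) * exp (-(t/2))"
        unfolding c by (simp add: algebra_simps)
      also have "\<dots> = exp t + 1" using e1 e2 by simp
      finally have n: "2 * exp (1/2*t) * cosh (1/2*t) = exp t + 1" .
      have "exp t > 0" by simp
      then have "exp t + 1 \<noteq> 0" by linarith
      then show ?thesis using n by (simp add: divide_simps)
    qed
    finally show "(\<lambda>m. fps_nth (Ef * Ch (1/2)) m * t^m) sums 1" .
  next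
    fix t :: real
    show "(\<lambda>m. fps_nth 1 m * t^m) sums 1"
      using powser_sums_if[of 0 t] by (simp add: fps_one_nth)
  qed
  then have "fps_nth (Ef * Ch (1/2)) (2*n) * fact (2*n) = (if n = 0 then 1 else 0)"
    by simp
  then have "(\<Sum>j\<le>n. real (2*n choose (2*j)) * (1/2)^(2*(n-j)) * E (2*j) (1/2)) = (if n = 0 then 1 else 0)"
    unfolding L0 by (simp add: Ef_def)
  then have "4^n * (\<Sum>j\<le>n. real (2*n choose (2*j)) * (1/2)^(2*(n-j)) * E (2*j) (1/2)) = (if n = 0 then 1 else 0)"
    by simp
  also have "4^n * (\<Sum>j\<le>n. real (2*n choose (2*j)) * (1/2)^(2*(n-j)) * E (2*j) (1/2))
      = (\<Sum>j\<le>n. real (2*n choose (2*j)) * 4^j * E (2*j) (1/2))"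
    unfolding sum_distrib_left
  proof (intro sum.cong refl)
    fix j assume "j \<in> {..n}"
    then have "n = j + (n - j)" by simp
    then have A: "(4::real)^n = 4^j * 4^(n-j)" by (metis power_add)
    have B: "(1/2::real)^(2*(n-j)) * 4^(n-j) = 1"
      by (simp add: power_mult power_one_over flip: power_mult_distrib)
    have "4^n * (real (2*n choose (2*j)) * (1/2)^(2*(n-j)) * E (2*j) (1/2)) =
        real (2*n choose (2*j)) * 4^j * E (2*j) (1/2) * ((1/2::real)^(2*(n-j)) * 4^(n-j))"
      unfolding A by (simp only: mult_ac)
    then show "4^n * (real (2*n choose (2*j)) * (1/2)^(2*(n-j)) * E (2*j) (1/2)) =
        real (2*n choose (2*j)) * 4^j * E (2*j) (1/2)"
      unfolding B by simp
  qed
  finally show ?thesis .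
qed




definition Pp :: "(nat \<Rightarrow> nat \<Rightarrow> real) \<Rightarrow> nat \<Rightarrow> real poly" where
  "Pp s n = (\<Sum>k\<le>n. monom (s n k) k)"

lemma poly_Pp: "poly (Pp s n) y = (\<Sum>k\<le>n. s n k * y^k)"
  by (simp add: Pp_def poly_sum poly_monom)

lemma coeff_Pp: "coeff (Pp s n) k = (if k \<le> n then s n k else 0)"
  by (simp add: Pp_def coeff_sum coeff_monom)

lemma R_small:
  fixes s :: "nat \<Rightarrow> nat \<Rightarrow> real"
  assumes salie_gf: "\<exists>\<delta>>0. \<forall>x y. \<bar>x\<bar> < \<delta> \<and> \<bar>y\<bar> < \<delta> \<longrightarrow>
      ((\<lambda>(n, k). x ^ (2 * n) / fact (2 * n) * s n k * y ^ k) has_sum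
         (cosh (x * sqrt (1 + 4 * y) / 2) / cosh (x / 2))) {(n, k). k \<le> n}"
  obtains d where "d > 0" "\<And>y n. \<bar>y\<bar> < d \<Longrightarrow>
     (\<Sum>j\<le>n. real (2*n choose (2*j)) * 4^j * poly (Pp s j) y) = (1 + 4*y)^n"
proof -
  obtain \<delta> where dpos: "\<delta> > 0" and hs: "\<And>x y. \<bar>x\<bar> < \<delta> \<Longrightarrow> \<bar>y\<bar> < \<delta> \<Longrightarrow>
      ((\<lambda>(n, k). x ^ (2 * n) / fact (2 * n) * s n k * y ^ k) has_sum
         (cosh (x * sqrt (1 + 4 * y) / 2) / cosh (x / 2))) {(n, k). k \<le> n}"
    using salie_gf by blast
  define d where "d = min \<delta> (1/4)"
  have d: "d > 0" using dpos by (simp add: d_def)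
  have main: "(\<Sum>j\<le>n. real (2*n choose (2*j)) * 4^j * poly (Pp s j) y) = (1 + 4*y)^n"
    if y: "\<bar>y\<bar> < d" for y n
  proof -
    have yd: "\<bar>y\<bar> < \<delta>" and y4: "\<bar>y\<bar> < 1/4" using y by (auto simp: d_def)
    define A where "A = Ev (\<lambda>n. poly (Pp s n) y)"
    define c where "c = sqrt (1 + 4*y) / 2"
    have smA: "(\<lambda>m. fps_nth A m * x^m) sums (cosh (x * sqrt (1 + 4 * y) / 2) / cosh (x / 2))"
      if x: "\<bar>x\<bar> < \<delta>" for x
    proof -
      let ?f = "\<lambda>(n, k). x ^ (2 * n) / fact (2 * n) * s n k * y ^ k"
      have sig: "Sigma UNIV (\<lambda>n. {..n}) = {(n::nat, k). k \<le> n}" by auto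
      have "(?f has_sum (cosh (x * sqrt (1 + 4 * y) / 2) / cosh (x / 2))) (Sigma UNIV (\<lambda>n. {..n}))"
        using hs[OF x yd] by (simp add: sig)
      then have "((\<lambda>n. \<Sum>k\<le>n. ?f (n,k)) has_sum (cosh (x * sqrt (1 + 4 * y) / 2) / cosh (x / 2))) UNIV"
        by (rule has_sum_SigmaD) (rule has_sum_finite, simp)
      then have "(\<lambda>n. \<Sum>k\<le>n. ?f (n,k)) sums (cosh (x * sqrt (1 + 4 * y) / 2) / cosh (x / 2))"
        by (rule has_sum_imp_sums)
      moreover have "(\<lambda>n. \<Sum>k\<le>n. ?f (n,k)) = (\<lambda>n. fps_nth A (2*n) * x^(2*n))"
      proof
        fix n
        have "fps_nth A (2*n) = (\<Sum>k\<le>n. s n k * y^k) / fact (2*n)"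
          by (simp add: A_def poly_Pp)
        then show "(\<Sum>k\<le>n. ?f (n,k)) = fps_nth A (2*n) * x^(2*n)"
          by (simp add: sum_distrib_left sum_distrib_right sum_divide_distrib mult_ac)
      qed
      ultimately have "(\<lambda>n. fps_nth A (2*n) * x^(2*n)) sums (cosh (x * sqrt (1 + 4 * y) / 2) / cosh (x / 2))"
        by simp
      moreover have "strict_mono (\<lambda>n::nat. 2*n)" by (auto simp: strict_mono_def)
      moreover have "fps_nth A m * x^m = 0" if "m \<notin> range (\<lambda>n::nat. 2*n)" for m
      proof -
        have "odd m" using that by auto
        then show ?thesis by (simp add: A_def Ev_nth)
      qed
      ultimately show ?thesis using sums_mono_reindex[of "\<lambda>n::nat. 2*n" "\<lambda>m. fps_nth A m * x^m"]
        by simp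
    qed
    have "A * Ch (1/2) = Ch c"
    proof (rule fps_eq_real[OF dpos])
      fix x :: real assume x: "\<bar>x\<bar> < \<delta>"
      have r: "ereal (norm x) < fps_conv_radius A"
        by (rule radius_from_summable[OF _ x]) (use smA sums_summable in blast)
      have "(\<lambda>m. fps_nth (A * Ch (1/2)) m * x^m) sums eval_fps (A * Ch (1/2)) x"
        by (rule sums_eval_fps, rule rad_mult[OF r Ch_radius])
      also have "eval_fps (A * Ch (1/2)) x = eval_fps A x * eval_fps (Ch (1/2)) x"
        by (rule eval_fps_mult[OF r Ch_radius])
      also have "eval_fps A x = cosh (x * sqrt (1 + 4 * y) / 2) / cosh (x / 2)"
        using smA[OF x] unfolding eval_fps_def by (simp add: sums_iff)
      also have "eval_fps (Ch (1/2)) x = cosh (1/2 * x)"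
        using Ch_sums unfolding eval_fps_def by (simp add: sums_iff)
      also have "cosh (x * sqrt (1 + 4 * y) / 2) / cosh (x / 2) * cosh (1/2 * x) = cosh (c * x)"
        by (simp add: c_def mult_ac)
      finally show "(\<lambda>m. fps_nth (A * Ch (1/2)) m * x^m) sums cosh (c * x)" .
    next
      fix x :: real
      show "(\<lambda>m. fps_nth (Ch c) m * x^m) sums cosh (c * x)" by (rule Ch_sums)
    qed
    then have "Ev (\<lambda>n. \<Sum>j\<le>n. real (2*n choose (2*j)) * (1/2)^(2*(n-j)) * poly (Pp s j) y) = Ev (\<lambda>n. c^(2*n))"
      unfolding A_def L1 by (simp add: Ch_def)
    then have e: "(\<Sum>j\<le>n. real (2*n choose (2*j)) * (1/2)^(2*(n-j)) * poly (Pp s j) y) = c^(2*n)"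
      by (rule Ev_inj)
    have c2: "c^(2*n) = (1 + 4*y)^n / 4^n"
    proof -
      have "c^2 = (1 + 4*y) / 4" using y4 by (simp add: c_def power_divide)
      then have "c^(2*n) = ((1 + 4*y) / 4)^n" by (metis power_mult)
      then show ?thesis by (simp add: power_divide)
    qed
    have "4^n * (\<Sum>j\<le>n. real (2*n choose (2*j)) * (1/2)^(2*(n-j)) * poly (Pp s j) y) = (1 + 4*y)^n"
      unfolding e c2 by simp
    also have "4^n * (\<Sum>j\<le>n. real (2*n choose (2*j)) * (1/2)^(2*(n-j)) * poly (Pp s j) y)
      = (\<Sum>j\<le>n. real (2*n choose (2*j)) * 4^j * poly (Pp s j) y)"
      unfolding sum_distrib_left
    proof (intro sum.cong refl)
      fix j assume "j \<in> {..n}"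
      then have "n = j + (n - j)" by simp
      then have A: "(4::real)^n = 4^j * 4^(n-j)" by (metis power_add)
      have B: "(1/2::real)^(2*(n-j)) * 4^(n-j) = 1"
        by (simp add: power_mult power_one_over flip: power_mult_distrib)
      have "4^n * (real (2*n choose (2*j)) * (1/2)^(2*(n-j)) * poly (Pp s j) y) =
          real (2*n choose (2*j)) * 4^j * poly (Pp s j) y * ((1/2::real)^(2*(n-j)) * 4^(n-j))"
        unfolding A by (simp only: mult_ac)
      then show "4^n * (real (2*n choose (2*j)) * (1/2)^(2*(n-j)) * poly (Pp s j) y) =
          real (2*n choose (2*j)) * 4^j * poly (Pp s j) y"
        unfolding B by simp
    qed
    finally show ?thesis by simp
  qed
  show ?thesis using that d main by blast
qed

lemma R_all:
  fixes s :: "nat \<Rightarrow> nat \<Rightarrow> real"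
  assumes salie_gf: "\<exists>\<delta>>0. \<forall>x y. \<bar>x\<bar> < \<delta> \<and> \<bar>y\<bar> < \<delta> \<longrightarrow>
      ((\<lambda>(n, k). x ^ (2 * n) / fact (2 * n) * s n k * y ^ k) has_sum
         (cosh (x * sqrt (1 + 4 * y) / 2) / cosh (x / 2))) {(n, k). k \<le> n}"
  shows "(\<Sum>j\<le>n. real (2*n choose (2*j)) * 4^j * poly (Pp s j) y) = (1 + 4*y)^n"
proof -
  obtain d where d: "d > 0" and m: "\<And>y n. \<bar>y\<bar> < d \<Longrightarrow>
     (\<Sum>j\<le>n. real (2*n choose (2*j)) * 4^j * poly (Pp s j) y) = (1 + 4*y)^n"
    using R_small[OF salie_gf] by blast
  define Q where "Q = (\<Sum>j\<le>n. Polynomial.smult (real (2*n choose (2*j)) * 4^j) (Pp s j)) - [:1, 4:]^n"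
  have pQ: "poly Q y = (\<Sum>j\<le>n. real (2*n choose (2*j)) * 4^j * poly (Pp s j) y) - (1 + 4*y)^n" for y
    by (simp add: Q_def poly_sum mult.commute[of y 4])
  have "Q = 0"
  proof (rule ccontr)
    assume "Q \<noteq> 0"
    then have "finite {y. poly Q y = 0}" by (rule poly_roots_finite)
    moreover have "{-d<..<d} \<subseteq> {y. poly Q y = 0}" using m by (auto simp: pQ)
    moreover have "infinite {-d<..<d}" using d by (intro infinite_Ioo) simp
    ultimately show False using finite_subset by blast
  qed
  then show ?thesis using pQ[of y] by simp
qed




lemma quarter_shift:
  fixes X :: "nat \<Rightarrow> real"
  shows "(\<Sum>j\<le>n. real (2*n choose (2*j)) * (1/2)^(2*(n-j)) * X j) * 4^n
       = (\<Sum>j\<le>n. real (2*n choose (2*j)) * 4^j * X j)"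
  unfolding sum_distrib_right
proof (intro sum.cong refl)
  fix j assume "j \<in> {..n}"
  then have "n = j + (n - j)" by simp
  then have A: "(4::real)^n = 4^j * 4^(n-j)" by (metis power_add)
  have B: "(1/2::real)^(2*(n-j)) * 4^(n-j) = 1"
    by (simp add: power_mult power_one_over flip: power_mult_distrib)
  have "real (2*n choose (2*j)) * (1/2)^(2*(n-j)) * X j * 4^n =
      real (2*n choose (2*j)) * 4^j * X j * ((1/2::real)^(2*(n-j)) * 4^(n-j))"
    unfolding A by (simp only: mult_ac)
  then show "real (2*n choose (2*j)) * (1/2)^(2*(n-j)) * X j * 4^n =
      real (2*n choose (2*j)) * 4^j * X j"
    unfolding B by simp
qed

context
  fixes s :: "nat \<Rightarrow> nat \<Rightarrow> real"
  assumes R: "\<And>n y. (\<Sum>j\<le>n. real (2*n choose (2*j)) * 4^j * poly (Pp s j) y) = (1 + 4*y)^n"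
begin

lemma AC: "Ev (\<lambda>n. poly (Pp s n) y) * C0 = Ev (\<lambda>n. (y + 1/4)^n)"
proof -
  have "(\<Sum>j\<le>n. real (2*n choose (2*j)) * (1/2)^(2*(n-j)) * poly (Pp s j) y) = (y + 1/4)^n" for n
  proof -
    have "(\<Sum>j\<le>n. real (2*n choose (2*j)) * (1/2)^(2*(n-j)) * poly (Pp s j) y) * 4^n = (1 + 4*y)^n"
      unfolding quarter_shift R ..
    then have "(\<Sum>j\<le>n. real (2*n choose (2*j)) * (1/2)^(2*(n-j)) * poly (Pp s j) y) = (1 + 4*y)^n / 4^n"
      by (simp add: field_simps)
    also have "\<dots> = ((1 + 4*y)/4)^n" by (simp add: power_divide)
    also have "(1 + 4*y)/4 = y + 1/4" by simp
    finally show ?thesis .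
  qed
  then show ?thesis unfolding C0_def L1 by simp
qed

lemma s00: "s 0 0 = 1"
  using R[of 0 0] by (simp add: poly_Pp)

definition wgt :: "nat \<Rightarrow> nat \<Rightarrow> real" where
  "wgt n i = fact (2*n) * fps_nth H0 i * real (2*n - i + 1) *
      (if even (2*n - i + 1) then 1 / fact (2*n - i + 1) else 0)"

lemma rec_poly:
  "poly (Pp s (Suc n)) y = y * poly (Pp s n) y - (\<Sum>i\<le>2*n. wgt n i * poly (Pp s ((2*n - i + 1) div 2)) y)"
proof -
  define A where "A = Ev (\<lambda>n. poly (Pp s n) y)"
  have eq: "fps_deriv (fps_deriv A) = fps_const y * A - H0 * fps_deriv A"
    unfolding A_def by (rule A_rec[OF AC])
  have "poly (Pp s (Suc n)) y / fact (2*n) = fps_nth (fps_deriv (fps_deriv A)) (2*n)"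
    unfolding A_def L2 by simp
  also have "\<dots> = fps_nth (fps_const y * A) (2*n) - fps_nth (H0 * fps_deriv A) (2*n)"
    unfolding eq by simp
  also have "fps_nth (fps_const y * A) (2*n) = y * (poly (Pp s n) y / fact (2*n))"
    by (simp add: A_def)
  also have "fps_nth (H0 * fps_deriv A) (2*n) = (\<Sum>i=0..2*n. fps_nth H0 i * fps_nth (fps_deriv A) (2*n - i))"
    by (rule fps_mult_nth)
  also have "\<dots> = (\<Sum>i\<le>2*n. wgt n i * poly (Pp s ((2*n - i + 1) div 2)) y / fact (2*n))"
  proof (simp only: atLeast0AtMost, intro sum.cong refl)
    fix i
    show "fps_nth H0 i * fps_nth (fps_deriv A) (2*n - i) = wgt n i * poly (Pp s ((2*n - i + 1) div 2)) y / fact (2*n)"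
      by (simp add: wgt_def A_def Ev_nth)
  qed
  finally have "poly (Pp s (Suc n)) y / fact (2*n) =
      y * (poly (Pp s n) y / fact (2*n)) - (\<Sum>i\<le>2*n. wgt n i * poly (Pp s ((2*n - i + 1) div 2)) y / fact (2*n))" .
  then show ?thesis by (simp add: field_simps sum_divide_distrib[symmetric])
qed

lemma rec_pp:
  "Pp s (Suc n) = pCons 0 (Pp s n) - (\<Sum>i\<le>2*n. Polynomial.smult (wgt n i) (Pp s ((2*n - i + 1) div 2)))"
  by (rule poly_eq_poly_eq_iff[THEN iffD1]) (auto simp: rec_poly poly_sum)

lemma rec_coeff:
  "coeff (Pp s (Suc n)) k = coeff (pCons 0 (Pp s n)) k - (\<Sum>i\<le>2*n. wgt n i * coeff (Pp s ((2*n - i + 1) div 2)) k)"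
  by (subst rec_pp) (simp add: coeff_sum)

lemma sign_Pp: "0 \<le> (-1)^(m+k) * coeff (Pp s m) k"
proof (induction m arbitrary: k rule: less_induct)
  case (less m)
  show ?case
  proof (cases m)
    case 0 then show ?thesis by (simp add: coeff_Pp s00)
  next
    case (Suc n)
    have IH: "0 \<le> (-1)^(j+k) * coeff (Pp s j) k" if "j \<le> n" for j k
      using less Suc that by auto
    have t1: "0 \<le> (-1)^(Suc n + k) * coeff (pCons 0 (Pp s n)) k"
    proof (cases k)
      case 0 then show ?thesis by simp
    next
      case (Suc k')
      then show ?thesis using IH[of n k'] by simp
    qed
    have t2: "0 \<le> (-1)^(n+k) * (wgt n i * coeff (Pp s ((2*n - i + 1) div 2)) k)" if i: "i \<le> 2*n" for i
    proof (cases "even i")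
      case True
      then show ?thesis using H0_sign[of i] by (simp add: wgt_def)
    next
      case False
      define a where "a = i div 2"
      have ia: "i = 2*a + 1" using False a_def by simp
      have an: "a < n" using i ia by simp
      have idx: "(2*n - i + 1) div 2 = n - a" "2*n - i + 1 = 2*(n-a)" using ia an by auto
      have wv: "wgt n i = (fact (2*n) * real (2*(n-a)) / fact (2*(n-a))) * fps_nth H0 i"
        unfolding wgt_def idx by simp
      have p1: "0 \<le> fact (2*n) * real (2*(n-a)) / (fact (2*(n-a)) :: real)" by simp
      have p2: "0 \<le> (-1)^a * fps_nth H0 i" using H0_sign[of i] False a_def by simp
      have p3: "0 \<le> (-1)^(n-a+k) * coeff (Pp s (n-a)) k" using IH[of "n-a" k] by simp
      have sg: "(-1::real)^(n+k) = (-1)^a * (-1)^(n-a+k)"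
        using an by (simp flip: power_add)
      have "0 \<le> (fact (2*n) * real (2*(n-a)) / fact (2*(n-a))) * (((-1)^a * fps_nth H0 i) * ((-1)^(n-a+k) * coeff (Pp s (n-a)) k))"
        by (rule mult_nonneg_nonneg[OF p1 mult_nonneg_nonneg[OF p2 p3]])
      then show ?thesis unfolding wv idx sg by (simp add: mult_ac)
    qed
    have "(-1)^(m+k) * coeff (Pp s m) k = (-1)^(Suc n + k) * coeff (pCons 0 (Pp s n)) k
        + (\<Sum>i\<le>2*n. (-1)^(n+k) * (wgt n i * coeff (Pp s ((2*n - i + 1) div 2)) k))"
      unfolding Suc rec_coeff by (simp add: algebra_simps sum_distrib_left sum_negf)
    also have "0 \<le> \<dots>" using t1 t2 by (intro add_nonneg_nonneg sum_nonneg) auto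
    finally show ?thesis by simp
  qed
qed

lemma s_sign: "k \<le> n \<Longrightarrow> s n k = (-1)^(n-k) * \<bar>s n k\<bar>"
proof -
  assume kn: "k \<le> n"
  have "0 \<le> (-1)^(n+k) * s n k" using sign_Pp[of n k] kn by (simp add: coeff_Pp)
  moreover have "(-1::real)^(n+k) = (-1)^(n-k)"
  proof -
    have e: "n + k = (n - k) + 2*k" using kn by simp
    show ?thesis by (subst e) (simp only: power_add power_mult, simp)
  qed
  ultimately have h: "0 \<le> (-1)^(n-k) * s n k" by simp
  show ?thesis
  proof (cases "even (n-k)")
    case True then show ?thesis using h by simp
  next
    case False then show ?thesis using h by simp
  qed
qed

lemma s_n0: "s n 0 = (if n = 0 then 1 else 0)"
proof (rule tri_unique[where X="\<lambda>j. s j 0" and Y="\<lambda>j. if j = 0 then 1 else 0"])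
  fix n
  show "(\<Sum>j\<le>n. real (2*n choose (2*j)) * 4^j * s j 0) = (\<Sum>j\<le>n. real (2*n choose (2*j)) * 4^j * (if j = 0 then 1 else 0))"
  proof -
    have lam: "(\<lambda>j. real (2*n choose (2*j)) * 4^j * (if j = 0 then 1 else 0)) = (\<lambda>j. if j = 0 then 1 else (0::real))"
      by auto
    have "(\<Sum>j\<le>n. real (2*n choose (2*j)) * 4^j * (if j = 0 then 1 else (0::real))) = 1"
      unfolding lam by (simp add: sum.delta)
    then show ?thesis using R[of n 0] by (simp add: poly_Pp)
  qed
qed

lemma P_quarter:
  assumes "\<And>n. (\<Sum>j\<le>n. real (2*n choose (2*j)) * 4^j * e j) = (if n = 0 then 1 else 0)"
  shows "poly (Pp s n) (-1/4) = e n"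
proof (rule tri_unique[where X="\<lambda>j. poly (Pp s j) (-1/4)" and Y=e])
  fix n
  show "(\<Sum>j\<le>n. real (2*n choose (2*j)) * 4^j * poly (Pp s j) (-1/4)) = (\<Sum>j\<le>n. real (2*n choose (2*j)) * 4^j * e j)"
    unfolding R assms by simp
qed

end




definition Kc :: "nat \<Rightarrow> nat \<Rightarrow> real" where
  "Kc i k = (if k \<le> i then real (i choose (2*(i-k))) else 0)"

lemma coeff_11_pow: "coeff ([:1,1:]^i) j = (if j \<le> i then real (i choose j) else 0)"
proof (cases "j \<le> i")
  case True then show ?thesis by (simp add: coeff_linear_poly_power)
next
  case False
  have "degree ([:1,1::real:]^i) \<le> i" using degree_power_le[of "[:1,1::real:]" i] by simp
  then have "coeff ([:1,1::real:]^i) j = 0" using False by (intro coeff_eq_0) simp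
  then show ?thesis using False by simp
qed

lemma coeff_q_pow: "coeff ([:0,1,1:]^i) (2*k) = Kc i k"
proof -
  have q: "[:0,1,1::real:] = monom 1 1 * [:1,1:]"
    by (simp add: monom_Suc)
  have pw: "[:0,1,1::real:]^i = monom 1 i * [:1,1:]^i"
    unfolding q power_mult_distrib monom_power by simp
  have "coeff ([:0,1,1::real:]^i) (2*k) = (if 2*k < i then 0 else coeff ([:1,1:]^i) (2*k - i))"
    unfolding pw by (simp add: coeff_monom_mult)
  also have "\<dots> = Kc i k"
  proof (cases "2*k < i")
    case True
    then have "i < 2*(i-k)" by simp
    then show ?thesis using True by (simp add: Kc_def binomial_eq_0)
  next
    case False
    show ?thesis
    proof (cases "k \<le> i")
      case True
      then have "2*k - i \<le> i" by simp
      then have "i choose (2*k - i) = i choose (i - (2*k - i))" by (rule binomial_symmetric)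
      moreover have "i - (2*k - i) = 2*(i-k)" using True False by simp
      ultimately show ?thesis using False True by (simp add: Kc_def coeff_11_pow)
    next
      case kf: False
      then show ?thesis using False by (simp add: Kc_def coeff_11_pow)
    qed
  qed
  finally show ?thesis .
qed

context
  fixes s :: "nat \<Rightarrow> nat \<Rightarrow> real"
  assumes R: "\<And>n y. (\<Sum>j\<le>n. real (2*n choose (2*j)) * 4^j * poly (Pp s j) y) = (1 + 4*y)^n"
begin

lemma b_lemma: "(\<Sum>i\<le>n. s n i * Kc i k) = (if n = k then 1 else 0)"
proof (rule tri_unique[where X="\<lambda>j. \<Sum>i\<le>j. s j i * Kc i k" and Y="\<lambda>j. if j = k then 1 else 0"])
  fix n
  define Xp where "Xp j = (\<Sum>i\<le>j. Polynomial.smult (s j i) ([:0,1,1:]^i))" for j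
  have pX: "poly (Xp j) w = poly (Pp s j) (w + w*w)" for j w
    by (simp add: Xp_def poly_Pp poly_sum algebra_simps)
  have cX: "coeff (Xp j) (2*k) = (\<Sum>i\<le>j. s j i * Kc i k)" for j
    by (simp add: Xp_def coeff_sum coeff_q_pow)
  have "(\<Sum>j\<le>n. Polynomial.smult (real (2*n choose (2*j)) * 4^j) (Xp j)) = [:1,2:]^(2*n)"
  proof (rule poly_eq_poly_eq_iff[THEN iffD1], rule ext)
    fix w :: real
    have "poly (\<Sum>j\<le>n. Polynomial.smult (real (2*n choose (2*j)) * 4^j) (Xp j)) w = (1 + 4*(w + w*w))^n"
      by (simp add: poly_sum pX R)
    also have "\<dots> = ((1 + 2*w)^2)^n" by (simp add: power2_eq_square algebra_simps)
    also have "\<dots> = (1 + 2*w)^(2*n)" by (simp add: power_mult)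
    also have "\<dots> = poly ([:1,2:]^(2*n)) w" by (simp add: poly_power mult.commute[of w 2])
    finally show "poly (\<Sum>j\<le>n. Polynomial.smult (real (2*n choose (2*j)) * 4^j) (Xp j)) w = poly ([:1,2:]^(2*n)) w" .
  qed
  then have "coeff (\<Sum>j\<le>n. Polynomial.smult (real (2*n choose (2*j)) * 4^j) (Xp j)) (2*k) = coeff ([:1,2:]^(2*n)) (2*k)"
    by simp
  then have L: "(\<Sum>j\<le>n. real (2*n choose (2*j)) * 4^j * (\<Sum>i\<le>j. s j i * Kc i k)) = coeff ([:1,2::real:]^(2*n)) (2*k)"
    by (simp add: coeff_sum cX)
  have lam: "(\<lambda>j. real (2*n choose (2*j)) * 4^j * (if j = k then 1 else 0)) = (\<lambda>j. if j = k then real (2*n choose (2*k)) * 4^k else (0::real))"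
    by auto
  have Rr: "(\<Sum>j\<le>n. real (2*n choose (2*j)) * 4^j * (if j = k then 1 else (0::real))) = (if k \<le> n then real (2*n choose (2*k)) * 4^k else 0)"
    unfolding lam by (simp add: sum.delta)
  have "coeff ([:1,2::real:]^(2*n)) (2*k) = (if k \<le> n then real (2*n choose (2*k)) * 4^k else 0)"
  proof (cases "k \<le> n")
    case True
    then show ?thesis by (subst coeff_linear_poly_power) (simp_all add: power_mult)
  next
    case False
    have "degree ([:1,2::real:]^(2*n)) \<le> 2*n" using degree_power_le[of "[:1,2::real:]" "2*n"] by simp
    then show ?thesis using False by (intro trans[OF coeff_eq_0]) auto
  qed
  then show "(\<Sum>j\<le>n. real (2*n choose (2*j)) * 4^j * (\<Sum>i\<le>j. s j i * Kc i k)) =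
        (\<Sum>j\<le>n. real (2*n choose (2*j)) * 4^j * (if j = k then 1 else 0))"
    using L Rr by simp
qed

end



theorem mainTheorem1:
  fixes s :: "nat \<Rightarrow> nat \<Rightarrow> real"
    and E :: "nat \<Rightarrow> real \<Rightarrow> real"
    and N :: nat
  assumes salie_gf: "\<exists>\<delta>>0. \<forall>x y. \<bar>x\<bar> < \<delta> \<and> \<bar>y\<bar> < \<delta> \<longrightarrow>
      ((\<lambda>(n, k). x ^ (2 * n) / fact (2 * n) * s n k * y ^ k) has_sum
         (cosh (x * sqrt (1 + 4 * y) / 2) / cosh (x / 2))) {(n, k). k \<le> n}"
    and euler_gf: "\<forall>x. \<exists>\<delta>>0. \<forall>t. \<bar>t\<bar> < \<delta> \<longrightarrow>
      (\<lambda>m. E m x * t ^ m / fact m) sums (2 * exp (x * t) / (exp t + 1))"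
    and N_pos: "N \<ge> 1"
  shows "(\<forall>n k. 1 \<le> k \<and> k \<le> n \<longrightarrow> s n k = (-1) ^ (n - k) * \<bar>s n k\<bar>)
    \<and> invertible_mat (ME N)
    \<and> (\<forall>B. inverts_mat (ME N) B \<and> inverts_mat B (ME N) \<longrightarrow>
         (\<forall>n k. 1 \<le> k \<and> k \<le> n \<and> n \<le> N \<longrightarrow>
            B $$ (n - 1, k - 1) = \<bar>s n k\<bar> / 4 ^ k))
    \<and> (\<forall>n \<ge> 1. \<bar>E (2 * n) (1 / 2)\<bar> = (-1) ^ n * E (2 * n) (1 / 2)
         \<and> (-1) ^ n * E (2 * n) (1 / 2) = (\<Sum>k = 1..n. \<bar>s n k\<bar> / 4 ^ k))"
proof -
  have R: "\<And>n y. (\<Sum>j\<le>n. real (2*n choose (2*j)) * 4^j * poly (Pp s j) y) = (1 + 4*y)^n"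
    by (rule R_all[OF salie_gf])
  have sgn: "\<And>n k. k \<le> n \<Longrightarrow> s n k = (-1)^(n-k) * \<bar>s n k\<bar>"
    by (rule s_sign[OF R])
  have abs_s: "\<bar>s n k\<bar> = (-1)^(n-k) * s n k" if "k \<le> n" for n k
  proof -
    have "(-1)^(n-k) * s n k = ((-1)^(n-k) * (-1)^(n-k)) * \<bar>s n k\<bar>"
      using sgn[OF that] by (metis mult.assoc)
    also have "(-1::real)^(n-k) * (-1)^(n-k) = 1" by (simp flip: power_add)
    finally show ?thesis by simp
  qed
  define Cm where "Cm = mat N N (\<lambda>(i,j). if j \<le> i then \<bar>s (i+1) (j+1)\<bar> / 4^(j+1) else (0::real))"
  have Cm_car: "Cm \<in> carrier_mat N N" by (simp add: Cm_def)
  have ME_car: "ME N \<in> carrier_mat N N" by (simp add: ME_def)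
  have CM: "Cm * ME N = 1\<^sub>m N"
  proof (rule eq_matI)
    fix i j assume ij: "i < dim_row (1\<^sub>m N :: real mat)" "j < dim_col (1\<^sub>m N :: real mat)"
    then have i: "i < N" and j: "j < N" by auto
    have trm: "Cm $$ (i,l) * ME N $$ (l,j) =
        (if l \<in> {..i} then (-1)^(i-j) * (s (i+1) (l+1) * Kc (l+1) (j+1)) else 0)" if l: "l < N" for l
    proof (cases "l \<le> i")
      case False then show ?thesis using i l j by (simp add: Cm_def ME_def)
    next
      case True
      show ?thesis
      proof (cases "j \<le> l")
        case False then show ?thesis using i l j True by (simp add: Cm_def ME_def Kc_def)
      next
        case jl: True
        have a: "\<bar>s (i+1) (l+1)\<bar> = (-1)^(i-l) * s (i+1) (l+1)" using abs_s[of "l+1" "i+1"] True by simp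
        have sg: "(-1::real)^(i-l) * (-1)^(l-j) = (-1)^(i-j)"
        proof -
          have "i - j = (i-l) + (l-j)" using True jl by simp
          then show ?thesis by (simp add: power_add)
        qed
        have "Cm $$ (i,l) * ME N $$ (l,j) = \<bar>s (i+1) (l+1)\<bar> / 4^(l+1) * ((-1)^(l-j) * 4^(l+1) * real (Suc l choose (2*(l-j))))"
          using i l j True jl by (simp add: Cm_def ME_def Let_def)
        also have "\<dots> = ((-1)^(i-l) * (-1)^(l-j)) * (s (i+1) (l+1) * real (Suc l choose (2*(l-j))))"
          unfolding a by simp
        also have "\<dots> = (-1)^(i-j) * (s (i+1) (l+1) * Kc (l+1) (j+1))"
          unfolding sg using jl by (simp add: Kc_def)
        finally show ?thesis using True by simp
      qed
    qed
    have "(Cm * ME N) $$ (i,j) = (\<Sum>l\<in>{0..<N}. Cm $$ (i,l) * ME N $$ (l,j))"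
      using i j Cm_car ME_car by (simp add: scalar_prod_def)
    also have "\<dots> = (\<Sum>l\<in>{..<N}. if l \<in> {..i} then (-1)^(i-j) * (s (i+1) (l+1) * Kc (l+1) (j+1)) else 0)"
      by (intro sum.cong) (auto simp: trm)
    also have "\<dots> = (\<Sum>l\<in>{..<N} \<inter> {..i}. (-1)^(i-j) * (s (i+1) (l+1) * Kc (l+1) (j+1)))"
      by (rule sum.inter_restrict[symmetric]) simp
    also have "{..<N} \<inter> {..i} = {..i}" using i by auto
    also have "(\<Sum>l\<in>{..i}. (-1)^(i-j) * (s (i+1) (l+1) * Kc (l+1) (j+1)))
        = (-1)^(i-j) * (\<Sum>L\<le>Suc i. s (Suc i) L * Kc L (Suc j))"
      by (simp only: sum.atMost_Suc_shift) (simp add: sum_distrib_left Kc_def)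
    also have "(\<Sum>L\<le>Suc i. s (Suc i) L * Kc L (Suc j)) = (if Suc i = Suc j then 1 else 0)"
      by (rule b_lemma[OF R])
    finally show "(Cm * ME N) $$ (i,j) = (1\<^sub>m N :: real mat) $$ (i,j)"
      using i j by simp
  qed (auto simp: Cm_def ME_def)
  have MC: "ME N * Cm = 1\<^sub>m N"
    by (rule mat_mult_left_right_inverse[OF Cm_car ME_car CM])
  have inv: "invertible_mat (ME N)"
    unfolding invertible_mat_def inverts_mat_def
    using MC CM ME_car Cm_car by (auto intro!: exI[of _ Cm])
  have Binv: "B $$ (n - 1, k - 1) = \<bar>s n k\<bar> / 4 ^ k"
    if B: "inverts_mat (ME N) B" "inverts_mat B (ME N)" and nk: "1 \<le> k" "k \<le> n" "n \<le> N" for B n k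
  proof -
    have MB: "ME N * B = 1\<^sub>m N" using B(1) ME_car by (simp add: inverts_mat_def)
    have BM: "B * ME N = 1\<^sub>m (dim_row B)" using B(2) by (simp add: inverts_mat_def)
    have "dim_col (B * ME N) = N" using ME_car by simp
    then have rB: "dim_row B = N" unfolding BM by simp
    have "dim_col (ME N * B) = N" unfolding MB by simp
    then have cB: "dim_col B = N" by simp
    have B_car: "B \<in> carrier_mat N N" using rB cB by auto
    have "B = 1\<^sub>m N * B" using B_car by simp
    also have "\<dots> = (Cm * ME N) * B" unfolding CM ..
    also have "\<dots> = Cm * (ME N * B)" using Cm_car ME_car B_car by (rule assoc_mult_mat)
    also have "\<dots> = Cm" unfolding MB using Cm_car by simp
    finally have "B = Cm" .
    then show ?thesis using nk by (simp add: Cm_def)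
  qed
  have Epart: "\<bar>E (2 * n) (1 / 2)\<bar> = (-1) ^ n * E (2 * n) (1 / 2)
         \<and> (-1) ^ n * E (2 * n) (1 / 2) = (\<Sum>k = 1..n. \<bar>s n k\<bar> / 4 ^ k)" if n: "n \<ge> 1" for n
  proof -
    have pq: "poly (Pp s n) (-1/4) = E (2*n) (1/2)"
      by (rule P_quarter[OF R, where e="\<lambda>j. E (2*j) (1/2)"]) (rule Ef_lemma[OF euler_gf])
    have s0: "s n 0 = 0" using s_n0[OF R, of n] n by simp
    have ins: "{..n} = insert 0 {1..n}" by auto
    have "poly (Pp s n) (-1/4) = (\<Sum>k\<le>n. s n k * (-1/4)^k)" by (rule poly_Pp)
    also have "\<dots> = s n 0 * (-1/4)^0 + (\<Sum>k=1..n. s n k * (-1/4)^k)"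
      unfolding ins by (subst sum.insert) auto
    finally have "poly (Pp s n) (-1/4) = s n 0 + (\<Sum>k=1..n. s n k * (-1/4)^k)"
      by simp
    also have "(\<Sum>k=1..n. s n k * (-1/4)^k) = (\<Sum>k=1..n. (-1)^n * (\<bar>s n k\<bar> / 4^k))"
    proof (intro sum.cong refl)
      fix k assume "k \<in> {1..n}"
      then have kn: "k \<le> n" by simp
      have q: "(-1/4::real)^k = (-1)^k / 4^k" by (rule power_divide)
      have "s n k * (-1/4)^k = ((-1)^(n-k) * (-1)^k) * (\<bar>s n k\<bar> / 4^k)"
        unfolding q by (subst sgn[OF kn]) simp
      also have "(-1::real)^(n-k) * (-1)^k = (-1)^n"
        using kn by (simp flip: power_add)
      finally show "s n k * (-1/4)^k = (-1)^n * (\<bar>s n k\<bar> / 4^k)" .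
    qed
    finally have "E (2*n) (1/2) = (-1)^n * (\<Sum>k=1..n. \<bar>s n k\<bar> / 4^k)"
      using pq s0 by (simp add: sum_distrib_left)
    then have "(-1)^n * E (2*n) (1/2) = ((-1)^n * (-1)^n) * (\<Sum>k=1..n. \<bar>s n k\<bar> / 4^k)"
      by (simp only: mult.assoc)
    moreover have "(-1::real)^n * (-1)^n = 1" by (simp flip: power_add)
    ultimately have e2: "(-1)^n * E (2*n) (1/2) = (\<Sum>k=1..n. \<bar>s n k\<bar> / 4^k)"
      by simp
    have nn: "0 \<le> (\<Sum>k=1..n. \<bar>s n k\<bar> / 4^k)" by (intro sum_nonneg) simp
    have "\<bar>E (2*n) (1/2)\<bar> = \<bar>(-1)^n * E (2*n) (1/2)\<bar>" by (simp add: abs_mult)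
    also have "\<dots> = (-1)^n * E (2*n) (1/2)" using e2 nn by simp
    finally show ?thesis using e2 by simp
  qed
  show ?thesis
    using sgn inv Binv Epart by auto
qed

end
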